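(* Let $S(\mathbf{G}(V,E),\mathbf{\Sigma})$ be a constrained switching system with $\mathbf{\Sigma}\subset\mathbb{R}^{n\times n}$, nodes $V=\{v_1,\dots,v_{|V|}\}$, and let $\mathbf{\Sigma}_{\mathbf{G}}=\{A_{(v_i,v_j,\sigma)} : (v_i,v_j,\sigma)\in E\}$ be its Kronecker lift, where $A_{(v_i,v_j,\sigma)}=(\mathbf{e}(j)\mathbf{e}(i)^\top)\otimes A_\sigma\in\mathbb{R}^{n|V|\times n|V|}$. Let $\gamma>0$. There exists a symmetric $Q_{\mathbf{G}}\succ0$ in $\mathbb{R}^{n|V|\times n|V|}$ such that $$A_{(v,w,\sigma)}^\top Q_{\mathbf{G}}A_{(v,w,\sigma)}-\gamma^2Q_{\mathbf{G}}\preceq0\quad\text{for all } (v,w,\sigma)\in E$$ if and only if $S$ has a quadratic multinorm with value at most $\gamma$.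
   Context: An automaton $\mathbf{G}(V,E)$ is a strongly connected directed graph with finite node set $V$ and finite edge set $E$ of labelled edges $(v,w,\sigma)$, $\sigma$ indexing a matrix $A_\sigma\in\mathbf{\Sigma}$; $S(\mathbf{G},\mathbf{\Sigma})$ is the switching system $x_{t+1}=A_{\sigma(t)}x_t$ whose switching sequences are label sequences of paths in $\mathbf{G}$. $\mathbf{e}(k)$ is the $k$-th canonical basis vector of $\mathbb{R}^{|V|}$ and $\otimes$ the Kronecker product. A quadratic multinorm for $S$ is a family $\{|\cdot|_v : v\in V\}$ with $|x|_v=(x^\top Q_vx)^{1/2}$ for symmetric $Q_v\succ0$; its value is $\min\{\gamma : |A_\sigma x|_w\le\gamma|x|_v\ \forall x\in\mathbb{R}^n,\ \forall(v,w,\sigma)\in E\}$ (equivalently the least $\gamma$ with $A_\sigma^\top Q_wA_\sigma\preceq\gamma^2Q_v$ for all edges). *)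

theory Defs
  imports "HOL-Analysis.Analysis"
begin

text \<open>Automaton: nodes are all elements of the finite type 'v, edges a finite set
  of labelled triples (v, w, sigma); labels index matrices via Sigma.\<close>

definition strongly_connected :: "('v \<times> 'v \<times> 's) set \<Rightarrow> bool" where
  "strongly_connected E \<longleftrightarrow>
     (\<forall>v w. (v, w) \<in> ({(a, b). \<exists>s. (a, b, s) \<in> E})\<^sup>*)"

definition automaton :: "('v::finite \<times> 'v \<times> 's) set \<Rightarrow> bool" where
  "automaton E \<longleftrightarrow> finite E \<and> strongly_connected E"

definition sym_posdef :: "real^'n^'n \<Rightarrow> bool" where
  "sym_posdef Q \<longleftrightarrow> transpose Q = Q \<and> (\<forall>x. x \<noteq> 0 \<longrightarrow> x \<bullet> (Q *v x) > 0)"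

definition neg_semidef :: "real^'n^'n \<Rightarrow> bool" where
  "neg_semidef M \<longleftrightarrow> (\<forall>x. x \<bullet> (M *v x) \<le> 0)"

definition kron :: "real^'a^'b \<Rightarrow> real^'c^'d \<Rightarrow> real^('a \<times> 'c)^('b \<times> 'd)" where
  "kron X A = (\<chi> i j. X $ fst i $ fst j * A $ snd i $ snd j)"

definition outer :: "real^'a \<Rightarrow> real^'b \<Rightarrow> real^'b^'a" where
  "outer u v = (\<chi> i j. u $ i * v $ j)"

definition basis_e :: "'v::finite \<Rightarrow> real^'v" where
  "basis_e k = axis k 1"

definition lift_matrix :: "('s \<Rightarrow> real^'n^'n) \<Rightarrow> ('v::finite \<times> 'v \<times> 's)
    \<Rightarrow> real^('v \<times> 'n)^('v \<times> 'n)" where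
  "lift_matrix Mats e = (case e of (v, w, s) \<Rightarrow> kron (outer (basis_e w) (basis_e v)) (Mats s))"

definition qnorm :: "real^'n^'n \<Rightarrow> real^'n \<Rightarrow> real" where
  "qnorm Q x = sqrt (x \<bullet> (Q *v x))"

definition is_quadratic_multinorm :: "('v \<Rightarrow> real^'n^'n) \<Rightarrow> bool" where
  "is_quadratic_multinorm Q \<longleftrightarrow> (\<forall>v. sym_posdef (Q v))"

definition multinorm_value ::
  "('v \<times> 'v \<times> 's) set \<Rightarrow> ('s \<Rightarrow> real^'n^'n) \<Rightarrow> ('v \<Rightarrow> real^'n^'n) \<Rightarrow> real" where
  "multinorm_value E Mats Q =
     Inf {g. g \<ge> 0 \<and> (\<forall>(v, w, s) \<in> E. \<forall>x.
            qnorm (Q w) (Mats s *v x) \<le> g * qnorm (Q v) x)}"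

end

theory Submission
  imports Defs
begin

definition blk :: "real^('v::finite \<times> 'n::finite) \<Rightarrow> 'v \<Rightarrow> real^'n" where
  "blk x a = (\<chi> c. x $ (a, c))"
definition emb :: "'v::finite \<Rightarrow> real^'n::finite \<Rightarrow> real^('v \<times> 'n)" where
  "emb w y = (\<chi> p. if fst p = w then y $ snd p else 0)"

lemma sum_pair: "(\<Sum>p\<in>UNIV. f p) = (\<Sum>a\<in>UNIV. \<Sum>c\<in>UNIV. (f (a, c) :: real))"
  by (simp add: sum.cartesian_product)

lemma inner_blk: "(x::real^('v::finite \<times> 'n::finite)) \<bullet> y = (\<Sum>a\<in>UNIV. blk x a \<bullet> blk y a)"
  by (simp add: inner_vec_def blk_def sum_pair)

lemma blk_emb: "blk (emb w y) a = (if a = w then y else 0)"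
  by (simp add: blk_def emb_def vec_eq_iff)

lemma lift_entry: "lift_matrix A (v, w, s) $ (b,d) $ (a,c) =
   (if b = w \<and> a = v then A s $ d $ c else 0)"
  by (simp add: lift_matrix_def kron_def outer_def basis_e_def axis_def)

lemma lift_mult: "lift_matrix A (v, w, s) *v x = emb w (A s *v blk x v)"
proof -
  have "(lift_matrix A (v, w, s) *v x) $ (b, d) = emb w (A s *v blk x v) $ (b, d)" for b d
  proof -
    have "(lift_matrix A (v, w, s) *v x) $ (b, d) =
       (\<Sum>a\<in>UNIV. \<Sum>c\<in>UNIV. (if b = w \<and> a = v then A s $ d $ c else 0) * x $ (a, c))"
      by (simp add: matrix_vector_mult_def sum_pair lift_entry)
    also have "\<dots> = (if b = w then (\<Sum>c\<in>UNIV. A s $ d $ c * x $ (v, c)) else 0)"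
    proof (cases "b = w")
      case True
      have "\<And>a. (\<Sum>c\<in>UNIV. (if a = v then A s $ d $ c else 0) * x $ (a, c)) =
         (if a = v then (\<Sum>c\<in>UNIV. A s $ d $ c * x $ (v, c)) else 0)" by auto
      then show ?thesis using True by simp
    qed simp
    finally show ?thesis by (simp add: emb_def matrix_vector_mult_def blk_def)
  qed
  then show ?thesis by (simp add: vec_eq_iff)
qed

lemma quad_lift: "x \<bullet> ((transpose L ** Q ** L - c *\<^sub>R Q) *v x)
   = (L *v x) \<bullet> (Q *v (L *v x)) - c * (x \<bullet> (Q *v (x::real^'m::finite)))"
proof -
  have "x \<bullet> ((transpose L ** Q ** L) *v x) = x \<bullet> (transpose L *v (Q *v (L *v x)))"
    by (simp add: matrix_vector_mul_assoc matrix_mul_assoc)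
  also have "\<dots> = (L *v x) \<bullet> (Q *v (L *v x))"
    by (metis dot_lmul_matrix inner_commute transpose_matrix_vector transpose_transpose vector_transpose_matrix)
  finally show ?thesis
    by (simp add: matrix_vector_mult_diff_rdistrib inner_diff_right scaleR_matrix_vector_assoc[symmetric])
qed


definition Qb :: "real^('v::finite \<times> 'n::finite)^('v \<times> 'n) \<Rightarrow> 'v \<Rightarrow> real^'n^'n" where
  "Qb QG v = (\<chi> i j. QG $ (v, i) $ (v, j))"

definition BD :: "('v::finite \<Rightarrow> real^'n::finite^'n) \<Rightarrow> real^('v \<times> 'n)^('v \<times> 'n)" where
  "BD Q = (\<chi> p q. if fst p = fst q then Q (fst p) $ snd p $ snd q else 0)"

lemma emb_entry: "emb v y $ (b, j) = (if b = v then y $ j else 0)"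
  by (simp add: emb_def)

lemma mult_emb_entry: "(QG *v emb v y) $ (a, i) = (\<Sum>j\<in>UNIV. QG $ (a, i) $ (v, j) * y $ j)"
proof -
  have "(QG *v emb v y) $ (a, i) = (\<Sum>b\<in>UNIV. \<Sum>j\<in>UNIV. QG $ (a, i) $ (b, j) * (if b = v then y $ j else 0))"
    by (simp add: matrix_vector_mult_def sum_pair emb_entry)
  also have "\<dots> = (\<Sum>b\<in>UNIV. if b = v then (\<Sum>j\<in>UNIV. QG $ (a, i) $ (v, j) * y $ j) else 0)"
    by (intro sum.cong) auto
  finally show ?thesis by simp
qed

lemma quad_emb: "emb v y \<bullet> (QG *v emb v y) = y \<bullet> (Qb QG v *v y)"
proof -
  have "emb v y \<bullet> (QG *v emb v y) = (\<Sum>a\<in>UNIV. (if a = v then y else 0) \<bullet> blk (QG *v emb v y) a)"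
    by (simp add: inner_blk blk_emb)
  also have "\<dots> = (\<Sum>a\<in>UNIV. if a = v then y \<bullet> blk (QG *v emb v y) v else 0)"
    by (intro sum.cong) auto
  also have "\<dots> = y \<bullet> blk (QG *v emb v y) v" by simp
  also have "blk (QG *v emb v y) v = Qb QG v *v y"
  proof -
    have "blk (QG *v emb v y) v $ i = (Qb QG v *v y) $ i" for i
    proof -
      have "blk (QG *v emb v y) v $ i = (QG *v emb v y) $ (v,i)" by (simp add: blk_def)
      also have "\<dots> = (\<Sum>j\<in>UNIV. QG $ (v, i) $ (v, j) * y $ j)" by (rule mult_emb_entry)
      also have "\<dots> = (Qb QG v *v y) $ i" by (simp add: matrix_vector_mult_def Qb_def)
      finally show ?thesis .
    qed
    then show ?thesis by (simp add: vec_eq_iff)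
  qed
  finally show ?thesis .
qed

lemma BD_entry: "BD Q $ (a, i) $ (b, j) = (if a = b then Q a $ i $ j else 0)"
  by (simp add: BD_def)

lemma blk_BD: "blk (BD Q *v x) a = Q a *v blk x a"
proof -
  have "(BD Q *v x) $ (a, i) = (Q a *v blk x a) $ i" for i
  proof -
    have "(BD Q *v x) $ (a, i) = (\<Sum>b\<in>UNIV. \<Sum>j\<in>UNIV. (if a = b then Q a $ i $ j else 0) * x $ (b, j))"
      by (simp add: matrix_vector_mult_def sum_pair BD_entry)
    also have "\<dots> = (\<Sum>b\<in>UNIV. if b = a then (\<Sum>j\<in>UNIV. Q a $ i $ j * x $ (a, j)) else 0)"
      by (intro sum.cong) auto
    finally show ?thesis by (simp add: matrix_vector_mult_def blk_def)
  qed
  then show ?thesis by (simp add: vec_eq_iff blk_def)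
qed

lemma quad_BD: "x \<bullet> (BD Q *v x) = (\<Sum>a\<in>UNIV. blk x a \<bullet> (Q a *v blk x a))"
  by (simp add: inner_blk blk_BD)

lemma posdef_nonneg: "sym_posdef Q \<Longrightarrow> 0 \<le> x \<bullet> (Q *v x)"
  unfolding sym_posdef_def by (cases "x = 0") (auto intro: less_imp_le)


lemma quad_scale: "(c *\<^sub>R x) \<bullet> (Q *v (c *\<^sub>R x)) = c^2 * (x \<bullet> (Q *v (x::real^'n::finite)))"
  by (simp add: matrix_vector_mult_scaleR power2_eq_square)

lemma quad_cont: "continuous_on UNIV (\<lambda>x::real^'n::finite. x \<bullet> (Q *v x))"
  by (intro continuous_intros linear_continuous_on matrix_vector_mul_bounded_linear)

lemma quad_lower:
  fixes Q :: "real^'n::finite^'n"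
  assumes "sym_posdef Q" shows "\<exists>m>0. \<forall>x. m * (norm x)^2 \<le> x \<bullet> (Q *v x)"
proof -
  let ?f = "\<lambda>x::real^'n. x \<bullet> (Q *v x)"
  have ne: "sphere (0::real^'n) 1 \<noteq> {}"
    using norm_axis_1[of undefined] by (metis dist_0_norm mem_sphere empty_iff)
  obtain u where u: "u \<in> sphere 0 1" "\<And>y. y \<in> sphere 0 1 \<Longrightarrow> ?f u \<le> ?f y"
    using continuous_attains_inf[OF compact_sphere ne continuous_on_subset[OF quad_cont subset_UNIV]]
    by blast
  have "u \<noteq> 0" using u(1) by auto
  then have mpos: "?f u > 0" using assms by (simp add: sym_posdef_def)
  have "?f u * (norm x)^2 \<le> ?f x" for x
  proof (cases "x = 0")
    case True then show ?thesis by simp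
  next
    case False
    let ?y = "(1 / norm x) *\<^sub>R x"
    have "?y \<in> sphere 0 1" using False by simp
    then have "?f u \<le> ?f ?y" by (rule u(2))
    also have "?f ?y = (1/norm x)^2 * ?f x" by (rule quad_scale)
    finally have "?f u \<le> (1/norm x)^2 * ?f x" .
    then have "?f u * (norm x)^2 \<le> (1/norm x)^2 * ?f x * (norm x)^2"
      by (simp add: mult_right_mono)
    also have "\<dots> = ?f x" using False by (simp add: field_simps)
    finally show ?thesis .
  qed
  then show ?thesis using mpos by blast
qed

lemma quad_upper:
  fixes Q :: "real^'n::finite^'n"
  shows "\<exists>K\<ge>0. \<forall>x. x \<bullet> (Q *v x) \<le> K * (norm x)^2"
proof -
  obtain K where K: "K > 0" "\<And>x. norm (Q *v x) \<le> norm x * K"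
    using bounded_linear.pos_bounded[OF matrix_vector_mul_bounded_linear[of Q]] by blast
  have "x \<bullet> (Q *v x) \<le> K * (norm x)^2" for x
  proof -
    have "x \<bullet> (Q *v x) \<le> norm x * norm (Q *v x)" by (rule norm_cauchy_schwarz)
    also have "\<dots> \<le> norm x * (norm x * K)" by (intro mult_left_mono K(2)) simp
    finally show ?thesis by (simp add: power2_eq_square mult_ac)
  qed
  then show ?thesis using K(1) by (intro exI[of _ K]) auto
qed

lemma edge_bound:
  fixes Qv Qw A :: "real^'n::finite^'n"
  assumes "sym_posdef Qv"
  shows "\<exists>g\<ge>0. \<forall>x. qnorm Qw (A *v x) \<le> g * qnorm Qv x"
proof -
  obtain m where m: "m > 0" "\<And>x. m * (norm x)^2 \<le> x \<bullet> (Qv *v x)"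
    using quad_lower[OF assms] by blast
  obtain K where K: "K \<ge> 0" "\<And>x. x \<bullet> (Qw *v x) \<le> K * (norm x)^2"
    using quad_upper by blast
  obtain B where B: "B > 0" "\<And>x. norm (A *v x) \<le> norm x * B"
    using bounded_linear.pos_bounded[OF matrix_vector_mul_bounded_linear[of A]] by blast
  define g where "g = sqrt K * B / sqrt m"
  have g0: "g \<ge> 0" using K B m by (simp add: g_def)
  have "qnorm Qw (A *v x) \<le> g * qnorm Qv x" for x
  proof -
    have "qnorm Qw (A *v x) \<le> sqrt (K * (norm (A *v x))^2)"
      unfolding qnorm_def by (intro real_sqrt_le_mono K(2))
    also have "\<dots> = sqrt K * norm (A *v x)" by (simp add: real_sqrt_mult)
    also have "\<dots> \<le> sqrt K * (norm x * B)" using K(1) by (intro mult_left_mono B(2)) simp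
    also have "\<dots> = g * (sqrt m * norm x)" using m by (simp add: g_def)
    also have "sqrt m * norm x = sqrt (m * (norm x)^2)" by (simp add: real_sqrt_mult)
    also have "g * \<dots> \<le> g * qnorm Qv x"
      unfolding qnorm_def by (intro mult_left_mono real_sqrt_le_mono m(2) g0)
    finally show ?thesis .
  qed
  then show ?thesis using g0 by blast
qed


lemma eps_lemma:
  fixes a q c :: real
  assumes "\<And>e. e > 0 \<Longrightarrow> a \<le> (c + e) * q" "q \<ge> 0"
  shows "a \<le> c * q"
proof (rule field_le_epsilon)
  fix d :: real assume d: "0 < d"
  have "a \<le> (c + d / (q + 1)) * q" using d assms(2) by (intro assms(1)) simp
  also have "\<dots> = c * q + d * (q / (q + 1))" using assms(2) by (simp add: field_simps)
  also have "\<dots> \<le> c * q + d * 1" using d assms(2) by (intro add_left_mono mult_left_mono) simp_all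
  finally show "a \<le> c * q + d" by simp
qed

lemma sqrt_step:
  fixes a b g :: real
  assumes "0 \<le> a" "0 \<le> b" "0 \<le> g" "sqrt a \<le> g * sqrt b"
  shows "a \<le> g^2 * b"
proof -
  have "a = (sqrt a)^2" using assms by simp
  also have "\<dots> \<le> (g * sqrt b)^2" using assms by (intro power_mono) simp_all
  also have "\<dots> = g^2 * b" using assms by (simp add: power_mult_distrib)
  finally show ?thesis .
qed

lemma sqrt_step2:
  fixes a b g :: real
  assumes "0 \<le> b" "0 \<le> g" "a \<le> g^2 * b"
  shows "sqrt a \<le> g * sqrt b"
proof -
  have "sqrt a \<le> sqrt (g^2 * b)" using assms by (intro real_sqrt_le_mono)
  also have "\<dots> = g * sqrt b" using assms by (simp add: real_sqrt_mult)
  finally show ?thesis .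
qed


theorem proposition3p14:
  fixes E :: "('v::finite \<times> 'v \<times> 's) set"
    and Mats :: "'s \<Rightarrow> real^'n^'n"
    and \<gamma> :: real
  assumes "automaton E"
    and "\<gamma> > 0"
  shows "(\<exists>QG :: real^('v \<times> 'n)^('v \<times> 'n). sym_posdef QG \<and>
            (\<forall>e \<in> E. neg_semidef
               (transpose (lift_matrix Mats e) ** QG ** lift_matrix Mats e - \<gamma>\<^sup>2 *\<^sub>R QG)))
     \<longleftrightarrow> (\<exists>Q :: 'v \<Rightarrow> real^'n^'n. is_quadratic_multinorm Q \<and>
            multinorm_value E Mats Q \<le> \<gamma>)"
proof
  assume "\<exists>QG :: real^('v \<times> 'n)^('v \<times> 'n). sym_posdef QG \<and>
            (\<forall>e \<in> E. neg_semidef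
               (transpose (lift_matrix Mats e) ** QG ** lift_matrix Mats e - \<gamma>\<^sup>2 *\<^sub>R QG))"
  then obtain QG :: "real^('v \<times> 'n)^('v \<times> 'n)" where pd: "sym_posdef QG"
    and ns: "\<forall>e \<in> E. neg_semidef
               (transpose (lift_matrix Mats e) ** QG ** lift_matrix Mats e - \<gamma>\<^sup>2 *\<^sub>R QG)"
    by blast
  define Q where "Q = Qb QG"
  have symQG: "QG $ p $ q = QG $ q $ p" for p q
  proof -
    have "transpose QG $ p $ q = QG $ p $ q" using pd by (simp add: sym_posdef_def)
    then show ?thesis by (simp add: transpose_def)
  qed
  have blk_emb_same: "blk (emb v y) v = y" for v y by (simp add: blk_emb)
  have mn: "is_quadratic_multinorm Q"
    unfolding is_quadratic_multinorm_def sym_posdef_def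
  proof (intro allI conjI impI)
    fix v
    show "transpose (Q v) = Q v"
      by (simp add: vec_eq_iff transpose_def Q_def Qb_def symQG)
    fix y :: "real^'n" assume "y \<noteq> 0"
    have b0: "blk (0::real^('v \<times> 'n)) v = 0" by (simp add: blk_def vec_eq_iff)
    then have "emb v y \<noteq> 0" using blk_emb_same[of v y] \<open>y \<noteq> 0\<close> by metis
    then have "emb v y \<bullet> (QG *v emb v y) > 0" using pd by (simp add: sym_posdef_def)
    then show "y \<bullet> (Q v *v y) > 0" by (simp add: quad_emb Q_def)
  qed
  have key: "(Mats s *v y) \<bullet> (Q w *v (Mats s *v y)) \<le> \<gamma>^2 * (y \<bullet> (Q v *v y))"
    if e: "(v, w, s) \<in> E" for v w s y
  proof -
    have "emb v y \<bullet> ((transpose (lift_matrix Mats (v,w,s)) ** QG ** lift_matrix Mats (v,w,s)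
           - \<gamma>\<^sup>2 *\<^sub>R QG) *v emb v y) \<le> 0"
      using ns e by (auto simp: neg_semidef_def)
    then show ?thesis
      by (simp add: quad_lift lift_mult blk_emb_same quad_emb Q_def)
  qed
  have "\<gamma> \<in> {g. g \<ge> 0 \<and> (\<forall>(v, w, s) \<in> E. \<forall>x.
            qnorm (Q w) (Mats s *v x) \<le> g * qnorm (Q v) x)}"
    using assms(2) mn key
    by (auto simp: qnorm_def is_quadratic_multinorm_def intro!: sqrt_step2 posdef_nonneg)
  then have "multinorm_value E Mats Q \<le> \<gamma>"
    unfolding multinorm_value_def
    by (intro cInf_lower) (auto intro: bdd_belowI[of _ 0])
  then show "\<exists>Q :: 'v \<Rightarrow> real^'n^'n. is_quadratic_multinorm Q \<and>
            multinorm_value E Mats Q \<le> \<gamma>" using mn by blast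
next
  assume "\<exists>Q :: 'v \<Rightarrow> real^'n^'n. is_quadratic_multinorm Q \<and>
            multinorm_value E Mats Q \<le> \<gamma>"
  then obtain Q :: "'v \<Rightarrow> real^'n^'n" where mn: "is_quadratic_multinorm Q"
    and val: "multinorm_value E Mats Q \<le> \<gamma>" by blast
  have pdQ: "sym_posdef (Q v)" for v using mn by (simp add: is_quadratic_multinorm_def)
  define S where "S = {g. g \<ge> 0 \<and> (\<forall>(v, w, s) \<in> E. \<forall>x.
            qnorm (Q w) (Mats s *v x) \<le> g * qnorm (Q v) x)}"
  have finE: "finite E" using assms(1) by (simp add: automaton_def)
  have "\<forall>e\<in>E. \<exists>g\<ge>0. \<forall>x. qnorm (Q (fst (snd e))) (Mats (snd (snd e)) *v x) \<le> g * qnorm (Q (fst e)) x"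
    using edge_bound[OF pdQ] by blast
  then obtain G where G: "\<And>e. e \<in> E \<Longrightarrow> G e \<ge> 0 \<and> (\<forall>x. qnorm (Q (fst (snd e))) (Mats (snd (snd e)) *v x) \<le> G e * qnorm (Q (fst e)) x)"
    by metis
  have "sum G E \<in> S"
    unfolding S_def
  proof (safe)
    show "0 \<le> sum G E" using G by (intro sum_nonneg) blast
    fix v w s x assume e: "(v, w, s) \<in> E"
    have "qnorm (Q w) (Mats s *v x) \<le> G (v, w, s) * qnorm (Q v) x" using G[OF e] by simp
    also have "\<dots> \<le> sum G E * qnorm (Q v) x"
      using G finE e by (intro mult_right_mono member_le_sum) (auto simp: qnorm_def posdef_nonneg[OF pdQ])
    finally show "qnorm (Q w) (Mats s *v x) \<le> sum G E * qnorm (Q v) x" .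
  qed
  then have Sne: "S \<noteq> {}" by blast
  have key: "(Mats s *v y) \<bullet> (Q w *v (Mats s *v y)) \<le> \<gamma>^2 * (y \<bullet> (Q v *v y))"
    if e: "(v, w, s) \<in> E" for v w s y
  proof -
    have "qnorm (Q w) (Mats s *v y) \<le> \<gamma> * qnorm (Q v) y"
    proof (rule eps_lemma)
      fix d :: real assume d: "d > 0"
      have "Inf S < \<gamma> + d" using val d by (simp add: S_def multinorm_value_def)
      then obtain g where g: "g \<in> S" "g < \<gamma> + d" using cInf_lessD[OF Sne] by blast
      have "qnorm (Q w) (Mats s *v y) \<le> g * qnorm (Q v) y" using g(1) e by (auto simp: S_def)
      also have "\<dots> \<le> (\<gamma> + d) * qnorm (Q v) y"
        using g(2) by (intro mult_right_mono) (auto simp: qnorm_def posdef_nonneg[OF pdQ])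
      finally show "qnorm (Q w) (Mats s *v y) \<le> (\<gamma> + d) * qnorm (Q v) y" .
    qed (simp add: qnorm_def posdef_nonneg[OF pdQ])
    then show ?thesis unfolding qnorm_def
      using assms(2) by (intro sqrt_step posdef_nonneg pdQ) auto
  qed
  have symQ: "Q a $ i $ j = Q a $ j $ i" for a i j
  proof -
    have "transpose (Q a) $ i $ j = Q a $ i $ j" using pdQ by (simp add: sym_posdef_def)
    then show ?thesis by (simp add: transpose_def)
  qed
  have quadBD_emb: "emb w z \<bullet> (BD Q *v emb w z) = z \<bullet> (Q w *v z)" for w z
  proof -
    have "emb w z \<bullet> (BD Q *v emb w z) = (\<Sum>a\<in>UNIV. if a = w then z \<bullet> (Q w *v z) else 0)"
      unfolding quad_BD by (intro sum.cong) (auto simp: blk_emb)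
    then show ?thesis by simp
  qed
  have "sym_posdef (BD Q)"
    unfolding sym_posdef_def
  proof (intro conjI allI impI)
    show "transpose (BD Q) = BD Q"
      by (simp add: vec_eq_iff transpose_def BD_def symQ)
    fix x :: "real^('v \<times> 'n)" assume "x \<noteq> 0"
    then obtain p where "x $ p \<noteq> 0" by (auto simp: vec_eq_iff)
    then obtain a where a: "blk x a \<noteq> 0"
      by (cases p) (auto simp: blk_def vec_eq_iff)
    show "x \<bullet> (BD Q *v x) > 0" unfolding quad_BD
      using a pdQ by (intro sum_pos2[where i=a]) (auto simp: sym_posdef_def posdef_nonneg)
  qed
  moreover have "\<forall>e \<in> E. neg_semidef
               (transpose (lift_matrix Mats e) ** BD Q ** lift_matrix Mats e - \<gamma>\<^sup>2 *\<^sub>R BD Q)"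
    unfolding neg_semidef_def
  proof (intro ballI allI)
    fix e x assume e: "e \<in> E"
    obtain v w s where evws: "e = (v, w, s)" by (cases e) auto
    have "(Mats s *v blk x v) \<bullet> (Q w *v (Mats s *v blk x v)) \<le> \<gamma>^2 * (blk x v \<bullet> (Q v *v blk x v))"
      using key e evws by blast
    also have "\<dots> \<le> \<gamma>^2 * (\<Sum>a\<in>UNIV. blk x a \<bullet> (Q a *v blk x a))"
      using pdQ by (intro mult_left_mono member_le_sum posdef_nonneg) auto
    finally show "x \<bullet> ((transpose (lift_matrix Mats e) ** BD Q ** lift_matrix Mats e - \<gamma>\<^sup>2 *\<^sub>R BD Q) *v x) \<le> 0"
      unfolding evws quad_lift lift_mult quadBD_emb quad_BD[of x] by simp
  qed
  ultimately show "\<exists>QG :: real^('v \<times> 'n)^('v \<times> 'n). sym_posdef QG \<and>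
            (\<forall>e \<in> E. neg_semidef
               (transpose (lift_matrix Mats e) ** QG ** lift_matrix Mats e - \<gamma>\<^sup>2 *\<^sub>R QG))"
    by blast
qed

end
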